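(* Let $a_2,a_3$ be integers with $1<a_2<a_3$, $A=\{1,a_2,a_3\}$, and let $h$ be a positive integer with $X(h)\ge a_3$. Write $X(h)=(k+1)a_3+Y$ with integers $k$ and $0\le Y<a_3$. Then $Y<a_3-1$, $k\ge 0$, and there is an integer $p$ with $0\le p\le k$ such that $SG(A,h-k,p)$ is a stride generator; moreover $y=Y+1$ is a break of $SG(A,h-k,p)$ which is either canonical or has break order $>k+1$.
   Context: An integer $x$ has an $h$-representation if $x=c_3a_3+c_2a_2+c_1$ with integers $c_1,c_2,c_3\ge0$ and $c_1+c_2+c_3\le h$. $X(h)$ is one less than the smallest positive integer with no $h$-representation. For integers $n$ and $i\ge 0$, an integer $x$ has an $n$-generation of order $i$ if there are integers $c_1,c_2\ge 0$ with $x+ia_3=c_2a_2+c_1$ and $c_1+c_2\le n+i$. For integers $n$ and $p\ge0$, $SG(A,n,p)$ is a stride generator if: (A) every integer $0\le x<a_3$ has an $n$-generation of some order $\le p$; (B) at least one integer $0\le x<a_3$ has no $n$-generation of order $<p$; (C) at least one integer $0\le y<a_3$ has no $(n-1)$-generation of any order $\le p+1$. Any $0\le y<a_3$ satisfying (C) is called a break. A break $y$ is canonical if there is no integer $j\ge 0$ with $y+ja_3=c_2a_2+c_1$, $c_1,c_2\ge 0$, $c_1+c_2\le (n-1)+j$; otherwise its break order is the smallest such $j$. *)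

theory Defs
  imports Main
begin

text \<open>A = {1, a2, a3}. All integers are of type int; coefficients and orders are nat (i.e. \<ge> 0).\<close>

definition hrep :: "int \<Rightarrow> int \<Rightarrow> int \<Rightarrow> int \<Rightarrow> bool" where
  "hrep a2 a3 h x \<longleftrightarrow> (\<exists>c1 c2 c3 :: nat.
      x = int c3 * a3 + int c2 * a2 + int c1 \<and> int (c1 + c2 + c3) \<le> h)"

definition Xh :: "int \<Rightarrow> int \<Rightarrow> int \<Rightarrow> int" where
  "Xh a2 a3 h = int (LEAST m :: nat. m > 0 \<and> \<not> hrep a2 a3 h (int m)) - 1"

definition ngen :: "int \<Rightarrow> int \<Rightarrow> int \<Rightarrow> nat \<Rightarrow> int \<Rightarrow> bool" where
  "ngen a2 a3 n i x \<longleftrightarrow> (\<exists>c1 c2 :: nat.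
      x + int i * a3 = int c2 * a2 + int c1 \<and> int (c1 + c2) \<le> n + int i)"

definition is_break :: "int \<Rightarrow> int \<Rightarrow> int \<Rightarrow> nat \<Rightarrow> int \<Rightarrow> bool" where
  "is_break a2 a3 n p y \<longleftrightarrow> 0 \<le> y \<and> y < a3 \<and> \<not> (\<exists>i \<le> p + 1. ngen a2 a3 (n - 1) i y)"

definition stride_generator :: "int \<Rightarrow> int \<Rightarrow> int \<Rightarrow> nat \<Rightarrow> bool" where
  "stride_generator a2 a3 n p \<longleftrightarrow>
     (\<forall>x. 0 \<le> x \<and> x < a3 \<longrightarrow> (\<exists>i \<le> p. ngen a2 a3 n i x)) \<and>
     (\<exists>x. 0 \<le> x \<and> x < a3 \<and> \<not> (\<exists>i < p. ngen a2 a3 n i x)) \<and>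
     (\<exists>y. is_break a2 a3 n p y)"

definition canonical_break :: "int \<Rightarrow> int \<Rightarrow> int \<Rightarrow> nat \<Rightarrow> int \<Rightarrow> bool" where
  "canonical_break a2 a3 n p y \<longleftrightarrow> is_break a2 a3 n p y \<and> \<not> (\<exists>j. ngen a2 a3 (n - 1) j y)"

definition break_order :: "int \<Rightarrow> int \<Rightarrow> int \<Rightarrow> int \<Rightarrow> nat" where
  "break_order a2 a3 n y = (LEAST j. ngen a2 a3 (n - 1) j y)"

end

theory Submission
  imports Defs
begin

lemma hrep_bound:
  assumes "1 < a2" "a2 < a3" "hrep a2 a3 h x"
  shows "x \<le> h * a3"
proof -
  obtain c1 c2 c3 :: nat where x: "x = int c3 * a3 + int c2 * a2 + int c1"
    and s: "int (c1 + c2 + c3) \<le> h" using assms(3) unfolding hrep_def by blast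
  have "int c2 * a2 \<le> int c2 * a3" using assms by (intro mult_left_mono) auto
  moreover have "int c1 \<le> int c1 * a3" using assms mult_left_mono[of 1 a3 "int c1"] by simp
  moreover have "int (c1 + c2 + c3) * a3 \<le> h * a3" using s assms by (intro mult_right_mono) auto
  ultimately show ?thesis unfolding x by (simp add: algebra_simps)
qed

lemma Xh_props:
  assumes "1 < a2" "a2 < a3" "0 < h"
  shows "\<And>t. 0 \<le> t \<Longrightarrow> t \<le> Xh a2 a3 h \<Longrightarrow> hrep a2 a3 h t"
    and "\<not> hrep a2 a3 h (Xh a2 a3 h + 1)"
    and "Xh a2 a3 h \<le> h * a3"
proof -
  define P where "P = (\<lambda>m::nat. m > 0 \<and> \<not> hrep a2 a3 h (int m))"
  define L where "L = (LEAST m. P m)"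
  have X: "Xh a2 a3 h = int L - 1" unfolding Xh_def L_def P_def by simp
  have ex: "P (nat (h*a3) + 1)"
  proof -
    have "h * a3 > 0" using assms by simp
    then have "int (nat (h*a3) + 1) = h*a3 + 1" by simp
    then show ?thesis unfolding P_def using hrep_bound[OF assms(1,2)] by fastforce
  qed
  have PL: "P L" unfolding L_def by (rule LeastI[of P, OF ex])
  have Lle: "L \<le> nat (h*a3) + 1" unfolding L_def by (rule Least_le[of P, OF ex])
  show "\<not> hrep a2 a3 h (Xh a2 a3 h + 1)" using PL X unfolding P_def by simp
  have "h * a3 > 0" using assms by simp
  then show "Xh a2 a3 h \<le> h * a3" using Lle X by simp
  fix t :: int assume t: "0 \<le> t" "t \<le> Xh a2 a3 h"
  show "hrep a2 a3 h t"
  proof (cases "t = 0")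
    case True
    then show ?thesis unfolding hrep_def using assms
      by (intro exI[of _ 0]) simp
  next
    case False
    then have "nat t < L" "nat t > 0" using t X by auto
    then have "\<not> P (nat t)" unfolding L_def using not_less_Least by blast
    then show ?thesis using \<open>nat t > 0\<close> t unfolding P_def by simp
  qed
qed

lemma hrep_to_ngen:
  assumes "0 \<le> x" "x < a3" "hrep a2 a3 h (x + int m * a3)" "0 \<le> a2"
  shows "\<exists>i\<le>m. ngen a2 a3 (h - int m) i x"
proof -
  have a3: "a3 > 0" using assms by simp
  obtain c1 c2 c3 :: nat where e: "x + int m * a3 = int c3 * a3 + int c2 * a2 + int c1"
    and s: "int (c1 + c2 + c3) \<le> h" using assms(3) unfolding hrep_def by blast
  have "int c3 * a3 < (int m + 1) * a3"
  proof -
    have "int c2 * a2 + int c1 \<ge> 0" using assms(4) by simp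
    then have "int c3 * a3 < int m * a3 + a3" using e assms(1,2) by linarith
    then show ?thesis by (simp add: algebra_simps)
  qed
  then have "int c3 < int m + 1" using a3 by (simp add: mult_less_cancel_right)
  then have c3: "c3 \<le> m" by simp
  have "x + int (m - c3) * a3 = int c2 * a2 + int c1" using e c3 by (simp add: algebra_simps of_nat_diff)
  moreover have "int (c1 + c2) \<le> h - int m + int (m - c3)" using s c3 by simp
  ultimately have "ngen a2 a3 (h - int m) (m - c3) x" unfolding ngen_def by blast
  then show ?thesis by (intro exI[of _ "m - c3"]) simp
qed

lemma ngen_to_hrep:
  assumes "ngen a2 a3 (h - int m) i x" "i \<le> m"
  shows "hrep a2 a3 h (x + int m * a3)"
proof -
  obtain c1 c2 :: nat where e: "x + int i * a3 = int c2 * a2 + int c1"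
    and s: "int (c1 + c2) \<le> h - int m + int i" using assms(1) unfolding ngen_def by blast
  have "x + int m * a3 = int (m - i) * a3 + int c2 * a2 + int c1"
    using e assms(2) by (simp add: algebra_simps of_nat_diff)
  moreover have "int (c1 + c2 + (m - i)) \<le> h" using s assms(2) by simp
  ultimately show ?thesis unfolding hrep_def by blast
qed

theorem lemma11:
  fixes a2 a3 h k Y :: int
  assumes "1 < a2" and "a2 < a3" and "0 < h"
    and "Xh a2 a3 h \<ge> a3"
    and "Xh a2 a3 h = (k + 1) * a3 + Y" and "0 \<le> Y" and "Y < a3"
  shows "Y < a3 - 1 \<and> k \<ge> 0 \<and>
    (\<exists>p :: nat. int p \<le> k \<and> stride_generator a2 a3 (h - k) p \<and>
       is_break a2 a3 (h - k) p (Y + 1) \<and>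
       (canonical_break a2 a3 (h - k) p (Y + 1) \<or>
        ((\<exists>j. ngen a2 a3 (h - k - 1) j (Y + 1)) \<and>
         int (break_order a2 a3 (h - k) (Y + 1)) > k + 1)))"
proof -
  note XP = Xh_props[OF assms(1-3)]
  have a3: "a3 > 0" using assms by simp
  have k0: "k \<ge> 0"
  proof -
    have "(k+1) * a3 > 0" using assms by simp
    then have "k + 1 > 0" using a3 zero_less_mult_pos2 by blast
    then show ?thesis by simp
  qed
  have Ylt: "Y < a3 - 1"
  proof (rule ccontr)
    assume "\<not> Y < a3 - 1"
    then have Y: "Y = a3 - 1" using assms by simp
    have "(k+2) * a3 \<le> h * a3 + 1" using XP(3) assms Y by (simp add: algebra_simps)
    also have "\<dots> < (h+1) * a3" using a3 assms by (simp add: algebra_simps)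
    finally have "k + 2 < h + 1" using a3 by (simp add: mult_less_cancel_right)
    then have "hrep a2 a3 h (int (nat (k+2)) * a3 + int 0 * a2 + int 0)"
      unfolding hrep_def using k0 by (intro exI[of _ 0] exI[of _ "nat (k+2)"]) simp
    moreover have "Xh a2 a3 h + 1 = int (nat (k+2)) * a3 + int 0 * a2 + int 0"
      using assms Y k0 by (simp add: algebra_simps)
    ultimately show False using XP(2) by simp
  qed
  define kn where "kn = nat k"
  have kn: "int kn = k" using k0 kn_def by simp
  define Q where "Q = (\<lambda>p. \<forall>x. 0 \<le> x \<and> x < a3 \<longrightarrow> (\<exists>i\<le>p. ngen a2 a3 (h - k) i x))"
  have Qk: "Q kn" unfolding Q_def
  proof (intro allI impI)
    fix x assume x: "0 \<le> x \<and> x < a3"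
    have "hrep a2 a3 h (x + int kn * a3)"
      using XP(1)[of "x + int kn * a3"] x kn assms k0 a3
      by (simp add: algebra_simps mult_nonneg_nonneg)
    then show "\<exists>i\<le>kn. ngen a2 a3 (h - k) i x" using hrep_to_ngen[of x a3 a2 h kn] x kn assms(1) by auto
  qed
  define p where "p = (LEAST p. Q p)"
  have Qp: "Q p" unfolding p_def by (rule LeastI[of Q, OF Qk])
  have pk: "p \<le> kn" unfolding p_def by (rule Least_le[of Q, OF Qk])
  have B: "\<exists>x. 0 \<le> x \<and> x < a3 \<and> \<not> (\<exists>i<p. ngen a2 a3 (h - k) i x)"
  proof (cases "p = 0")
    case True
    then show ?thesis using a3 by (intro exI[of _ 0]) simp
  next
    case False
    then have "\<not> Q (p - 1)" unfolding p_def using not_less_Least[of "p-1" Q] p_def by simp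
    then obtain x where "0 \<le> x \<and> x < a3" "\<not> (\<exists>i\<le>p-1. ngen a2 a3 (h - k) i x)"
      unfolding Q_def by blast
    moreover have "\<And>i. i < p \<Longrightarrow> i \<le> p - 1" using False by simp
    ultimately show ?thesis by blast
  qed
  have nog: "\<not> ngen a2 a3 (h - k - 1) i (Y + 1)" if "i \<le> kn + 1" for i
  proof
    assume g: "ngen a2 a3 (h - k - 1) i (Y + 1)"
    have eq: "h - k - 1 = h - int (kn + 1)" using kn by simp
    have g': "ngen a2 a3 (h - int (kn + 1)) i (Y + 1)" using g unfolding eq .
    have "hrep a2 a3 h (Y + 1 + int (kn+1) * a3)"
      by (rule ngen_to_hrep[OF g' that])
    moreover have "Y + 1 + int (kn+1) * a3 = Xh a2 a3 h + 1" using assms kn by (simp add: algebra_simps)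
    ultimately show False using XP(2) by metis
  qed
  have br: "is_break a2 a3 (h - k) p (Y + 1)"
    unfolding is_break_def using assms Ylt nog pk by auto
  have sg: "stride_generator a2 a3 (h - k) p"
    unfolding stride_generator_def using Qp B br unfolding Q_def by blast
  have last: "canonical_break a2 a3 (h - k) p (Y + 1) \<or>
        ((\<exists>j. ngen a2 a3 (h - k - 1) j (Y + 1)) \<and>
         int (break_order a2 a3 (h - k) (Y + 1)) > k + 1)"
  proof (cases "\<exists>j. ngen a2 a3 (h - k - 1) j (Y + 1)")
    case True
    then obtain j where j: "ngen a2 a3 (h - k - 1) j (Y + 1)" by blast
    have "ngen a2 a3 (h - k - 1) (break_order a2 a3 (h - k) (Y + 1)) (Y + 1)"
      unfolding break_order_def by (rule LeastI[of "\<lambda>j. ngen a2 a3 (h - k - 1) j (Y + 1)", OF j])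
    then have "\<not> break_order a2 a3 (h - k) (Y + 1) \<le> kn + 1" using nog by blast
    then show ?thesis using True kn by simp
  next
    case False
    then show ?thesis unfolding canonical_break_def using br by simp
  qed
  show ?thesis using Ylt k0 pk kn sg br last by (intro conjI exI[of _ p]) auto
qed

end
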